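(* In any quiver, normality is anti-hereditary: if $B$ is a normal vertex and $A$ is an ancestor of $B$, then $A$ is normal.
   Context: A quiver consists of a class of vertices and, for each ordered pair of vertices $(A,B)$, a set of edges $A\to B$ (loops and multiple edges allowed). An evolution of length $m\ge 0$ is a sequence $A_0\leftarrow A_1\leftarrow\cdots\leftarrow A_m$ of vertices together with edges $A_k\to A_{k-1}$ ($1\le k\le m$); $A_0$ is its initial and $A_m$ its terminal vertex. Write $A\le B$ ($A$ is an ancestor of $B$) if there is an evolution with initial vertex $A$ and terminal vertex $B$; $A,B$ are isotypic if $A\le B$ and $B\le A$. A vertex $A$ is primitive if every ancestor of $A$ is isotypic to $A$. A full evolution for $X$ is an evolution with primitive initial vertex and terminal vertex $X$. The height $h(X)$ is the smallest length of a full evolution for $X$ ($\infty$ if none). A vertex $A_k$ ($0\le k<m$) of an evolution $A_0\leftarrow\cdots\leftarrow A_m$ is critical if $h(A_k)<\infty$ and $h(A_{k+1})=h(A_k)+1$. The critical ancestors of a vertex $B$ are the critical vertices of full evolutions terminating at $B$. $B$ is normal if any two critical ancestors of $B$ of equal height are isotypic. *)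

theory Defs
  imports Main "HOL-Library.Extended_Nat"
begin

text \<open>A quiver is given by its vertex type 'v and, for each ordered pair (A,B),
the set Q A B of edges A -> B (edges of type 'e).
An evolution A_0 <- A_1 <- ... <- A_m is represented by the list of vertices
[A_0,...,A_m] and the list of edges [e_1,...,e_m] with e_k an edge A_k -> A_(k-1).\<close>

type_synonym ('v, 'e) quiver = "'v \<Rightarrow> 'v \<Rightarrow> 'e set"

definition evolution :: "('v, 'e) quiver \<Rightarrow> 'v list \<Rightarrow> 'e list \<Rightarrow> bool" where
  "evolution Q vs es \<longleftrightarrow> vs \<noteq> [] \<and> length es = length vs - 1 \<and>
     (\<forall>k. 1 \<le> k \<and> k < length vs \<longrightarrow> es ! (k - 1) \<in> Q (vs ! k) (vs ! (k - 1)))"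

text \<open>length of an evolution: m = length vs - 1; initial vertex hd vs, terminal vertex last vs.\<close>

definition ancestor :: "('v, 'e) quiver \<Rightarrow> 'v \<Rightarrow> 'v \<Rightarrow> bool" where
  "ancestor Q A B \<longleftrightarrow> (\<exists>vs es. evolution Q vs es \<and> hd vs = A \<and> last vs = B)"

definition isotypic :: "('v, 'e) quiver \<Rightarrow> 'v \<Rightarrow> 'v \<Rightarrow> bool" where
  "isotypic Q A B \<longleftrightarrow> ancestor Q A B \<and> ancestor Q B A"

definition primitive :: "('v, 'e) quiver \<Rightarrow> 'v \<Rightarrow> bool" where
  "primitive Q A \<longleftrightarrow> (\<forall>C. ancestor Q C A \<longrightarrow> isotypic Q C A)"

definition full_evolution :: "('v, 'e) quiver \<Rightarrow> 'v \<Rightarrow> 'v list \<Rightarrow> 'e list \<Rightarrow> bool" where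
  "full_evolution Q X vs es \<longleftrightarrow> evolution Q vs es \<and> primitive Q (hd vs) \<and> last vs = X"

text \<open>Height: least length of a full evolution for X; infinity (Inf of the empty set) if none.\<close>
definition height :: "('v, 'e) quiver \<Rightarrow> 'v \<Rightarrow> enat" where
  "height Q X = (INF p \<in> {(vs, es). full_evolution Q X vs es}. enat (length (fst p) - 1))"

definition critical_index :: "('v, 'e) quiver \<Rightarrow> 'v list \<Rightarrow> nat \<Rightarrow> bool" where
  "critical_index Q vs k \<longleftrightarrow> k < length vs - 1 \<and> height Q (vs ! k) < \<infinity> \<and>
     height Q (vs ! Suc k) = height Q (vs ! k) + 1"

definition critical_ancestors :: "('v, 'e) quiver \<Rightarrow> 'v \<Rightarrow> 'v set" where
  "critical_ancestors Q B =
     {vs ! k | vs es k. full_evolution Q B vs es \<and> critical_index Q vs k}"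

definition normal :: "('v, 'e) quiver \<Rightarrow> 'v \<Rightarrow> bool" where
  "normal Q B \<longleftrightarrow> (\<forall>C \<in> critical_ancestors Q B. \<forall>D \<in> critical_ancestors Q B.
      height Q C = height Q D \<longrightarrow> isotypic Q C D)"

end

theory Submission
  imports Defs
begin

lemma evo_append:
  assumes "evolution Q vs es" "evolution Q ws fs" "last vs = hd ws"
  shows "evolution Q (vs @ tl ws) (es @ fs)"
  unfolding evolution_def
proof (intro conjI allI impI)
  show "vs @ tl ws \<noteq> []" using assms(1) by (simp add: evolution_def)
  show "length (es @ fs) = length (vs @ tl ws) - 1"
  proof -
    have "vs \<noteq> []" "ws \<noteq> []" using assms by (auto simp: evolution_def)
    moreover have "length es = length vs - 1" "length fs = length ws - 1"
      using assms by (auto simp: evolution_def)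
    ultimately show ?thesis by (cases vs; cases ws) auto
  qed
next
  fix k assume k: "1 \<le> k \<and> k < length (vs @ tl ws)"
  have lv: "length es = length vs - 1" "vs \<noteq> []" using assms(1) by (auto simp: evolution_def)
  have lw: "length fs = length ws - 1" "ws \<noteq> []" using assms(2) by (auto simp: evolution_def)
  show "(es @ fs) ! (k - 1) \<in> Q ((vs @ tl ws) ! k) ((vs @ tl ws) ! (k - 1))"
  proof (cases "k < length vs")
    case True
    then show ?thesis using assms(1) k lv by (auto simp: evolution_def nth_append)
  next
    case False
    define j where "j = k - length vs + 1"
    have j: "1 \<le> j" "j < length ws" using k False lw(2) by (auto simp: j_def)
    have e: "(es @ fs) ! (k - 1) = fs ! (j - 1)" using False lv k by (auto simp: nth_append j_def)
    have v1: "(vs @ tl ws) ! k = ws ! j" using False lv lw k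
      by (auto simp: nth_append j_def nth_tl)
    have v2: "(vs @ tl ws) ! (k - 1) = ws ! (j - 1)"
    proof (cases "k = length vs")
      case True
      then have "(vs @ tl ws) ! (k - 1) = last vs" using lv by (simp add: nth_append last_conv_nth)
      also have "\<dots> = ws ! 0" using assms(3) lw(2) by (simp add: hd_conv_nth)
      finally show ?thesis using True by (simp add: j_def)
    next
      case False2: False
      then have "Suc (k - Suc (length vs)) = k - length vs" using False by simp
      then show ?thesis using False False2 lv lw k by (auto simp: nth_append j_def nth_tl)
    qed
    show ?thesis using assms(2) j unfolding e v1 v2 evolution_def by auto
  qed
qed

lemma crit_sub:
  assumes "ancestor Q A B"
  shows "critical_ancestors Q A \<subseteq> critical_ancestors Q B"
proof
  fix C assume "C \<in> critical_ancestors Q A"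
  then obtain vs es k where C: "C = vs ! k" and f: "full_evolution Q A vs es"
    and c: "critical_index Q vs k" unfolding critical_ancestors_def by blast
  obtain ws fs where w: "evolution Q ws fs" "hd ws = A" "last ws = B"
    using assms unfolding ancestor_def by blast
  have ev: "evolution Q vs es" and p: "primitive Q (hd vs)" and l: "last vs = A"
    using f by (auto simp: full_evolution_def)
  have ne: "vs \<noteq> []" "ws \<noteq> []" using ev w(1) by (auto simp: evolution_def)
  have E: "evolution Q (vs @ tl ws) (es @ fs)" using evo_append[OF ev w(1)] l w(2) by simp
  have lst: "last (vs @ tl ws) = B"
    using ne l w by (cases ws) auto
  have F: "full_evolution Q B (vs @ tl ws) (es @ fs)"
    using E p ne lst by (simp add: full_evolution_def)
  have kk: "Suc k < length vs" using c ne by (auto simp: critical_index_def)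
  have "critical_index Q (vs @ tl ws) k"
    using c kk by (auto simp: critical_index_def nth_append)
  moreover have "C = (vs @ tl ws) ! k" using C kk by (simp add: nth_append)
  ultimately show "C \<in> critical_ancestors Q B" using F unfolding critical_ancestors_def by blast
qed

theorem lemma4p1:
  fixes Q :: "('v, 'e) quiver" and A B :: 'v
  assumes "normal Q B" and "ancestor Q A B"
  shows "normal Q A"
  using assms crit_sub[OF assms(2)] unfolding normal_def by blast

end
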